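(* Let $N \ge 2$, let $0 \le z_1 < \dots < z_N < 1$, let $\alpha_1,\dots,\alpha_N>0$ with $\sum_i \alpha_i = 1$, and let $\mu = \sum_{i=1}^N \alpha_i \delta_{z_i}$ on $[0,1]$. If $\lambda$ is an eigenvalue of the $\mu$-Laplacian $\Delta^\mu$, then $\lambda \in \mathbb R$ and $$2 \min_{i \in \{1,\dots,N\}} B_{i,i} \le \lambda \le 0,$$ where $B_{i,i} = -\alpha_{i-1}^{-2} - \alpha_i^{-2}$ with the convention $\alpha_0 := \alpha_N$.
   Context: $\delta_z$ is the Dirac measure at $z$. $L^2_\mu$ is the space of $\mu$-a.e. classes of real square-integrable functions on $[0,1]$ with inner product $\langle f,g\rangle_\mu = \sum_{i=1}^N \alpha_i f(z_i)g(z_i)$. $\mathscr D^1_\mu$ is the set of functions $f$ on $[0,1]$ for which there is $f' \in L^2_\mu$ with $f(0)=f(1)$ and $f(x) = f(0) + \int \mathbf 1_{[0,x)} f'\,d\mu$ for all $x\in[0,1]$ (with $[0,0)=\emptyset$); then $\nabla^\mu f := f'$, explicitly $\nabla^\mu f(z_n) = (f(z_{n+1})-f(z_n))/\alpha_n$ for $n<N$ and $\nabla^\mu f(z_N) = (f(z_1)-f(z_N))/\alpha_N$. Every class of $L^2_\mu$ has a representative in $\mathscr D^1_\mu$. The energy form is $\mathcal E(f,g) = \langle \nabla^\mu f, \nabla^\mu g\rangle_\mu$. A function $f \in \mathscr D^1_\mu$ belongs to $\mathscr D^2_\mu$ if there is $h \in L^2_\mu$ with $\mathcal E(f,g) = -\langle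 h, g\rangle_\mu$ for all $g\in\mathscr D^1_\mu$, and then $\Delta^\mu f := h$. Writing $A$ for the $N\times N$ matrix of $\nabla^\mu$ acting on $(f(z_1),\dots,f(z_N))^\top$ (so $A_{n,n} = -\alpha_n^{-1}$, $A_{n,n+1} = \alpha_n^{-1}$ for $n<N$, $A_{N,N} = -\alpha_N^{-1}$, $A_{N,1} = \alpha_N^{-1}$, other entries $0$), the paper takes $B := -A^\top A$ as matrix representation of $\Delta^\mu$; its diagonal entries are $B_{i,i} = -\alpha_{i-1}^{-2}-\alpha_i^{-2}$ (indices mod $N$). *)

theory Defs
  imports Complex_Main "Jordan_Normal_Form.Char_Poly"
begin

text \<open>Indices are shifted by one: row/column i (0 \<le> i < N) corresponds to the atom z_(i+1),
  and alpha i is the weight of z_(i+1).\<close>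

text \<open>Matrix A of the discrete derivative nabla^mu acting on (f(z_1),...,f(z_N)).\<close>
definition grad_mat :: "nat \<Rightarrow> (nat \<Rightarrow> real) \<Rightarrow> real mat" where
  "grad_mat N alpha = mat N N (\<lambda>(i, j).
     (if j = i then - 1 / alpha i else 0) + (if j = Suc i mod N then 1 / alpha i else 0))"

definition lap_mat :: "nat \<Rightarrow> (nat \<Rightarrow> real) \<Rightarrow> real mat" where
  "lap_mat N alpha = - (transpose_mat (grad_mat N alpha) * grad_mat N alpha)"

end

theory Submission imports Defs begin

definition gg :: "nat \<Rightarrow> (nat \<Rightarrow> real) \<Rightarrow> nat \<Rightarrow> nat \<Rightarrow> real" where
  "gg N alpha k i = (if i = k then - 1 / alpha k else 0) + (if i = Suc k mod N then 1 / alpha k else 0)"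

lemma lap_entry:
  assumes "i < N" "j < N"
  shows "lap_mat N alpha $$ (i,j) = - (\<Sum>k<N. gg N alpha k i * gg N alpha k j)"
proof -
  have d: "dim_row (grad_mat N alpha) = N" "dim_col (grad_mat N alpha) = N"
    by (simp_all add: grad_mat_def)
  have "lap_mat N alpha $$ (i,j) = - (col (grad_mat N alpha) i \<bullet> col (grad_mat N alpha) j)"
    using assms d by (simp add: lap_mat_def)
  also have "\<dots> = - (\<Sum>k<N. gg N alpha k i * gg N alpha k j)"
    unfolding scalar_prod_def using assms d
    by (simp add: lessThan_atLeast0 grad_mat_def gg_def)
  finally show ?thesis .
qed

lemma core:
  fixes x :: "nat \<Rightarrow> complex" and g :: "nat \<Rightarrow> nat \<Rightarrow> real"
  assumes "\<And>i. i < N \<Longrightarrow> (\<Sum>j<N. complex_of_real (- (\<Sum>k<N. g k i * g k j)) * x j) = lam * x i"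
  shows "lam * (\<Sum>i<N. cnj (x i) * x i) = - (\<Sum>k<N. cnj (\<Sum>j<N. g k j * x j) * (\<Sum>j<N. g k j * x j))"
proof -
  have "lam * (\<Sum>i<N. cnj (x i) * x i) = (\<Sum>i<N. cnj (x i) * (lam * x i))"
    unfolding sum_distrib_left by (rule sum.cong) (simp_all add: mult.left_commute)
  also have "\<dots> = (\<Sum>i<N. cnj (x i) * (\<Sum>j<N. complex_of_real (- (\<Sum>k<N. g k i * g k j)) * x j))"
    using assms by simp
  also have "\<dots> = (\<Sum>i<N. \<Sum>j<N. \<Sum>k<N. - (cnj (x i) * g k i * (g k j * x j)))"
  proof (rule sum.cong[OF refl])
    fix i
    have "cnj (x i) * (\<Sum>j<N. complex_of_real (- (\<Sum>k<N. g k i * g k j)) * x j)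
       = (\<Sum>j<N. cnj (x i) * (complex_of_real (- (\<Sum>k<N. g k i * g k j)) * x j))"
      by (rule sum_distrib_left)
    also have "\<dots> = (\<Sum>j<N. \<Sum>k<N. - (cnj (x i) * g k i * (g k j * x j)))"
    proof (rule sum.cong[OF refl])
      fix j
      have "complex_of_real (- (\<Sum>k<N. g k i * g k j)) = (\<Sum>k<N. - (complex_of_real (g k i) * complex_of_real (g k j)))"
        by (simp add: sum_negf)
      then show "cnj (x i) * (complex_of_real (- (\<Sum>k<N. g k i * g k j)) * x j) = (\<Sum>k<N. - (cnj (x i) * g k i * (g k j * x j)))"
        by (simp add: sum_distrib_left sum_distrib_right mult.assoc mult.left_commute)
    qed
    finally show "cnj (x i) * (\<Sum>j<N. complex_of_real (- (\<Sum>k<N. g k i * g k j)) * x j) = (\<Sum>j<N. \<Sum>k<N. - (cnj (x i) * g k i * (g k j * x j)))" .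
  qed
  also have "\<dots> = (\<Sum>i<N. \<Sum>k<N. \<Sum>j<N. - (cnj (x i) * g k i * (g k j * x j)))"
    by (rule sum.cong[OF refl], rule sum.swap)
  also have "\<dots> = (\<Sum>k<N. \<Sum>i<N. \<Sum>j<N. - (cnj (x i) * g k i * (g k j * x j)))"
    by (rule sum.swap)
  also have "\<dots> = (\<Sum>k<N. - (cnj (\<Sum>j<N. g k j * x j) * (\<Sum>j<N. g k j * x j)))"
  proof (rule sum.cong[OF refl])
    fix k
    have e: "cnj (\<Sum>j<N. g k j * x j) = (\<Sum>i<N. cnj (x i) * g k i)"
      by (simp add: mult.commute)
    show "(\<Sum>i<N. \<Sum>j<N. - (cnj (x i) * g k i * (g k j * x j))) = - (cnj (\<Sum>j<N. g k j * x j) * (\<Sum>j<N. g k j * x j))"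
      unfolding e sum_distrib_left sum_distrib_right sum_negf by (simp, rule sum.swap)
  qed
  also have "\<dots> = - (\<Sum>k<N. cnj (\<Sum>j<N. g k j * x j) * (\<Sum>j<N. g k j * x j))"
    by (rule sum_negf)
  finally show ?thesis .
qed

lemma reidx:
  assumes "N \<ge> 2"
  shows "(\<Sum>k<N. (c (Suc k mod N) :: real) * d k) = (\<Sum>j<N. c j * d ((j + N - 1) mod N))"
proof (rule sum.reindex_bij_witness[where i="\<lambda>j. (j + N - 1) mod N" and j="\<lambda>k. Suc k mod N"])
  fix a assume a: "a \<in> {..<N}"
  show "(Suc a mod N + N - 1) mod N = a"
  proof (cases "Suc a = N")
    case True then show ?thesis using a assms by simp
  next
    case False then have "Suc a < N" using a by simp
    then have "(Suc a mod N + N - 1) = a + 1 * N" by simp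
    then show ?thesis using a by (metis lessThan_iff mod_less mod_mult_self1)
  qed
  show "Suc a mod N \<in> {..<N}" using assms by simp
  show "c (Suc a mod N) * d ((Suc a mod N + N - 1) mod N) = c (Suc a mod N) * d a"
    using \<open>(Suc a mod N + N - 1) mod N = a\<close> by simp
next
  fix b assume b: "b \<in> {..<N}"
  show "Suc ((b + N - 1) mod N) mod N = b"
  proof (cases "b = 0")
    case True then show ?thesis using assms by simp
  next
    case False
    then have "b + N - 1 = (b - 1) + 1 * N" by simp
    then have "(b + N - 1) mod N = b - 1" using b by (metis lessThan_iff less_imp_diff_less mod_less mod_mult_self1)
    then show ?thesis using b False by simp
  qed
  show "(b + N - 1) mod N \<in> {..<N}" using assms by simp
qed

lemma u_eq:
  assumes "N \<ge> 2" "k < N"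
  shows "(\<Sum>j<N. complex_of_real (gg N alpha k j) * x j) = (x (Suc k mod N) - x k) / complex_of_real (alpha k)"
proof -
  have ne: "Suc k mod N \<noteq> k"
    using assms by (metis Suc_lessI mod_less mod_self n_not_Suc_n not_less0 order.strict_trans1 zero_less_numeral le_numeral_extra(3) less_2_cases_iff less_Suc_eq)
  have "(\<Sum>j<N. complex_of_real (gg N alpha k j) * x j) =
      (\<Sum>j<N. (if j = k then - x k / alpha k else 0)) + (\<Sum>j<N. (if j = Suc k mod N then x (Suc k mod N) / alpha k else 0))"
    unfolding sum.distrib[symmetric] by (rule sum.cong) (auto simp: gg_def field_simps)
  also have "\<dots> = (x (Suc k mod N) - x k) / complex_of_real (alpha k)"
    using assms by (simp add: diff_divide_distrib)
  finally show ?thesis .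
qed

lemma norm_diff_sq: "(cmod (a - b))^2 \<le> 2 * ((cmod a)^2 + (cmod b)^2)"
proof -
  have "cmod (a - b) \<le> cmod a + cmod b" by (rule norm_triangle_ineq4)
  then have "(cmod (a - b))^2 \<le> (cmod a + cmod b)^2" by (simp add: power_mono)
  also have "\<dots> \<le> 2 * ((cmod a)^2 + (cmod b)^2)"
  proof -
    have "0 \<le> (cmod a - cmod b)^2" by simp
    then show ?thesis unfolding power2_diff power2_sum distrib_left by linarith
  qed
  finally show ?thesis .
qed

theorem proposition3p1:
  fixes N :: nat and z alpha :: "nat \<Rightarrow> real" and lam :: complex
  assumes "N \<ge> 2"
    and "0 \<le> z 0" and "\<And>i. Suc i < N \<Longrightarrow> z i < z (Suc i)" and "z (N - 1) < 1"
    and "\<And>i. i < N \<Longrightarrow> alpha i > 0"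
    and "(\<Sum>i<N. alpha i) = 1"
    and "eigenvalue (map_mat complex_of_real (lap_mat N alpha)) lam"
  shows "lam \<in> \<real> \<and>
    2 * Min {- (1 / (alpha ((i + N - 1) mod N))\<^sup>2) - 1 / (alpha i)\<^sup>2 | i. i < N} \<le> Re lam \<and>
    Re lam \<le> 0"
proof -
  let ?M = "map_mat complex_of_real (lap_mat N alpha)"
  have dM: "dim_row (lap_mat N alpha) = N" "dim_col (lap_mat N alpha) = N"
    by (simp_all add: lap_mat_def grad_mat_def)
  obtain v where v: "v \<in> carrier_vec N" "v \<noteq> 0\<^sub>v N" "?M *\<^sub>v v = lam \<cdot>\<^sub>v v"
    using assms(7) dM unfolding eigenvalue_def eigenvector_def by auto
  define x where "x i = v $ i" for i
  have eq: "(\<Sum>j<N. complex_of_real (- (\<Sum>k<N. gg N alpha k i * gg N alpha k j)) * x j) = lam * x i"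
    if i: "i < N" for i
  proof -
    have "(?M *\<^sub>v v) $ i = lam * x i" using v i by (simp add: x_def)
    moreover have "(?M *\<^sub>v v) $ i = (\<Sum>j<N. complex_of_real (lap_mat N alpha $$ (i,j)) * x j)"
      using v(1) i dM by (simp add: scalar_prod_def lessThan_atLeast0 x_def)
    ultimately show ?thesis using i by (simp add: lap_entry)
  qed
  define u where "u k = (\<Sum>j<N. complex_of_real (gg N alpha k j) * x j)" for k
  have c: "lam * (\<Sum>i<N. cnj (x i) * x i) = - (\<Sum>k<N. cnj (u k) * u k)"
    unfolding u_def by (rule core) (rule eq)
  define S where "S = (\<Sum>i<N. (cmod (x i))^2)"
  define T where "T = (\<Sum>k<N. (cmod (u k))^2)"
  have sq: "cnj w * w = complex_of_real ((cmod w)^2)" for w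
    by (metis complex_norm_square mult.commute of_real_power)
  have c2: "lam * complex_of_real S = - complex_of_real T"
    using c unfolding S_def T_def sq by simp
  have "\<exists>i<N. x i \<noteq> 0"
  proof (rule ccontr)
    assume "\<not> ?thesis"
    then have "v = 0\<^sub>v N" using v(1) by (intro eq_vecI) (auto simp: x_def)
    with v(2) show False by simp
  qed
  then obtain i0 where i0: "i0 < N" "x i0 \<noteq> 0" by auto
  have Spos: "S > 0" unfolding S_def
    by (rule sum_pos2[of _ i0]) (use i0 in auto)
  have T0: "T \<ge> 0" unfolding T_def by (simp add: sum_nonneg)
  have lam_eq: "lam = complex_of_real (- T / S)"
    using c2 Spos by (simp add: field_simps)
  define Mn where "Mn = Min {- (1 / (alpha ((i + N - 1) mod N))\<^sup>2) - 1 / (alpha i)\<^sup>2 | i. i < N}"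
  have Mn_le: "Mn \<le> - (1 / (alpha ((i + N - 1) mod N))\<^sup>2) - 1 / (alpha i)\<^sup>2" if "i < N" for i
  proof -
    have fin: "finite {- (1 / (alpha ((i + N - 1) mod N))\<^sup>2) - 1 / (alpha i)\<^sup>2 | i. i < N}"
      by simp
    show ?thesis unfolding Mn_def by (rule Min_le[OF fin]) (use that in blast)
  qed
  have cb: "1 / (alpha ((j + N - 1) mod N))^2 + 1 / (alpha j)^2 \<le> - Mn" if "j \<in> {..<N}" for j
    using Mn_le[of j] that by simp
  have ub: "(cmod (u k))^2 \<le> 2 * ((cmod (x (Suc k mod N)))^2 / (alpha k)^2 + (cmod (x k))^2 / (alpha k)^2)"
    if k: "k < N" for k
  proof -
    have "u k = (x (Suc k mod N) - x k) / complex_of_real (alpha k)"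
      unfolding u_def using assms(1) k by (rule u_eq)
    then have "(cmod (u k))^2 = (cmod (x (Suc k mod N) - x k))^2 / (alpha k)^2"
      using assms(5)[OF k] by (simp add: norm_divide power_divide)
    also have "\<dots> \<le> 2 * ((cmod (x (Suc k mod N)))^2 + (cmod (x k))^2) / (alpha k)^2"
      by (rule divide_right_mono) (use norm_diff_sq in auto)
    finally show ?thesis by (simp add: add_divide_distrib)
  qed
  have "T \<le> (\<Sum>k<N. 2 * ((cmod (x (Suc k mod N)))^2 / (alpha k)^2 + (cmod (x k))^2 / (alpha k)^2))"
    unfolding T_def by (rule sum_mono) (rule ub, simp)
  also have "\<dots> = 2 * ((\<Sum>k<N. (cmod (x (Suc k mod N)))^2 * (1 / (alpha k)^2)) + (\<Sum>k<N. (cmod (x k))^2 / (alpha k)^2))"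
    by (simp add: sum_distrib_left sum.distrib)
  also have "(\<Sum>k<N. (cmod (x (Suc k mod N)))^2 * (1 / (alpha k)^2)) = (\<Sum>j<N. (cmod (x j))^2 * (1 / (alpha ((j + N - 1) mod N))^2))"
    by (rule reidx[OF assms(1)])
  also have "2 * ((\<Sum>j<N. (cmod (x j))^2 * (1 / (alpha ((j + N - 1) mod N))^2)) + (\<Sum>k<N. (cmod (x k))^2 / (alpha k)^2))
     = 2 * (\<Sum>j<N. (cmod (x j))^2 * (1 / (alpha ((j + N - 1) mod N))^2 + 1 / (alpha j)^2))"
    by (simp add: sum.distrib[symmetric] algebra_simps)
  also have "\<dots> \<le> 2 * (\<Sum>j<N. (cmod (x j))^2 * (- Mn))"
    by (rule mult_left_mono[OF sum_mono], rule mult_left_mono[OF cb], auto)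
  also have "\<dots> = - 2 * Mn * S"
    by (simp add: S_def sum_distrib_left sum_distrib_right algebra_simps)
  finally have "T \<le> - 2 * Mn * S" .
  then have "2 * Mn * S \<le> - T" by linarith
  then have "2 * Mn \<le> (- T) / S" using Spos by (simp only: pos_le_divide_eq[OF Spos])
  then have "2 * Mn \<le> - T / S" by simp
  moreover have "- T / S \<le> 0" using Spos T0 by simp
  moreover have "Re lam = - T / S" unfolding lam_eq by simp
  moreover have "lam \<in> \<real>" unfolding lam_eq by (rule Reals_of_real)
  ultimately show ?thesis unfolding Mn_def[symmetric] by linarith
qed

end
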